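(* Let $m\ge5$ be an odd integer and $n=\frac{3^m+1}{4}$. Then $\delta_1=\frac{3^{m-1}-1}{8}$ and $\delta_2=\frac{3^{m-1}-1}{8}-2$ are the largest and the second largest $3$-cyclotomic coset leaders modulo $n$, respectively, and $|C_{\delta_1}|=|C_{\delta_2}|=2m$.
   Context: For $0\le s\le n-1$, $C_s=\{s3^i\bmod n:i\ge0\}$ is the $3$-cyclotomic coset of $s$ modulo $n$; its least element is its coset leader. *)

theory Defs
  imports Main
begin

definition cyc_coset :: "nat \<Rightarrow> nat \<Rightarrow> nat \<Rightarrow> nat set" where
  "cyc_coset q n s = {s * q ^ i mod n | i. True}"

definition is_coset_leader :: "nat \<Rightarrow> nat \<Rightarrow> nat \<Rightarrow> bool" where
  "is_coset_leader q n d \<longleftrightarrow> d < n \<and> d = Min (cyc_coset q n d)"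

end

theory Submission
  imports Defs
begin


lemma step_mod: "(x * 3 ^ Suc k) mod (n::nat) = (3 * (x * 3 ^ k mod n)) mod n"
  by (simp add: mod_mult_right_eq mult.left_commute)

lemma shift_mod: "(x * 3 ^ (k + t)) mod (n::nat) = ((x * 3 ^ k mod n) * 3 ^ t) mod n"
  by (simp add: power_add mod_mult_left_eq mult.assoc)

lemma neg_aux:
  fixes c n :: nat
  assumes "c < n" "0 < c"
  shows "(c * (4 * n - 1)) mod n = n - c"
proof -
  have "c * (4 * n - 1) = (n - c) + (4 * c - 1) * n"
  proof -
    have "int (c * (4 * n - 1)) = int c * (4 * int n - 1)" using assms by (simp add: of_nat_diff)
    also have "... = int (n - c) + (4 * int c - 1) * int n" using assms by (simp add: of_nat_diff algebra_simps)
    also have "... = int ((n - c) + (4 * c - 1) * n)" using assms by (simp add: of_nat_diff)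
    finally show ?thesis by linarith
  qed
  then have "(c * (4 * n - 1)) mod n = (n - c) mod n" by simp
  also have "... = n - c" using assms by simp
  finally show ?thesis .
qed

lemma neg_mod:
  fixes x n m :: nat
  assumes "3 ^ m + 1 = 4 * n"
  shows "(x * 3 ^ (k + m)) mod n = (n - x * 3 ^ k mod n) mod n"
proof -
  have n0: "0 < n" using assms by (metis add_gr_0 less_numeral_extra(1) mult_is_0 neq0_conv)
  have e: "3 ^ m = 4 * n - 1" using assms by simp
  define c where "c = x * 3 ^ k mod n"
  have cn: "c < n" using n0 c_def by simp
  have "(x * 3 ^ (k + m)) mod n = (c * (4 * n - 1)) mod n"
    using shift_mod[of x k m n] e c_def by simp
  also have "... = (n - c) mod n"
  proof (cases "c = 0")
    case True then show ?thesis by simp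
  next
    case False then show ?thesis using neg_aux[of c n] cn by simp
  qed
  finally show ?thesis using c_def by simp
qed

lemma period_mod:
  fixes x n m :: nat
  assumes "3 ^ m + 1 = 4 * n"
  shows "(x * 3 ^ (k + 2 * m)) mod n = x * 3 ^ k mod n"
proof -
  have n0: "0 < n" using assms by (metis add_gr_0 less_numeral_extra(1) mult_is_0 neq0_conv)
  have "(x * 3 ^ (k + 2 * m)) mod n = (x * 3 ^ ((k + m) + m)) mod n" by (simp add: add.assoc mult_2)
  also have "... = (n - x * 3 ^ (k + m) mod n) mod n" using neg_mod[OF assms] by blast
  also have "... = (n - (n - x * 3 ^ k mod n) mod n) mod n" using neg_mod[OF assms] by simp
  also have "... = x * 3 ^ k mod n"
  proof (cases "x * 3 ^ k mod n = 0")
    case True then show ?thesis by simp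
  next
    case False
    then have "(n - x * 3 ^ k mod n) mod n = n - x * 3 ^ k mod n" using n0 by simp
    then show ?thesis using n0 False by simp
  qed
  finally show ?thesis .
qed

lemma period_gen:
  fixes x n m :: nat
  assumes "3 ^ m + 1 = 4 * n"
  shows "(x * 3 ^ (k + q * (2 * m))) mod n = x * 3 ^ k mod n"
proof (induction q)
  case 0 then show ?case by simp
next
  case (Suc q)
  have "x * 3 ^ (k + Suc q * (2 * m)) mod n = x * 3 ^ ((k + q * (2 * m)) + 2 * m) mod n"
    by (simp add: algebra_simps)
  also have "... = x * 3 ^ (k + q * (2 * m)) mod n" using period_mod[OF assms] by blast
  finally show ?case using Suc by simp
qed

lemma period_red:
  fixes x n m :: nat
  assumes "3 ^ m + 1 = 4 * n"
  shows "(x * 3 ^ i) mod n = x * 3 ^ (i mod (2 * m)) mod n"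
proof -
  have "i = i mod (2 * m) + (i div (2 * m)) * (2 * m)" by (metis mod_div_mult_eq add.commute)
  then have "(x * 3 ^ i) mod n = x * 3 ^ (i mod (2 * m) + (i div (2 * m)) * (2 * m)) mod n" by metis
  also have "... = x * 3 ^ (i mod (2 * m)) mod n" using period_gen[OF assms] by blast
  finally show ?thesis .
qed



lemma no_survivor:
  fixes n m d :: nat
  assumes e: "3 ^ m + 1 = 4 * n" and odd: "odd n" and dn: "d < n" and d0: "0 < d"
    and bnd: "\<And>i. n < 6 * (d * 3 ^ i mod n) \<and> n < 6 * (n - d * 3 ^ i mod n)"
  shows False
proof -
  have n0: "0 < n" using dn by simp
  define c where "c i = d * 3 ^ i mod n" for i
  define D where "D i = int n - 2 * int (c i)" for i
  have cn: "c i < n" for i using n0 c_def by simp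
  have Dne: "D i \<noteq> 0" for i
  proof
    assume "D i = 0"
    then have "n = 2 * c i" unfolding D_def by linarith
    then show False using odd by simp
  qed
  have Db: "3 * D i < 2 * int n \<and> - 2 * int n < 3 * D i" for i
    using bnd[of i] cn[of i] unfolding D_def c_def by (simp add: of_nat_diff) linarith
  have rec: "\<exists>j::int. (j = -1 \<or> j = 0 \<or> j = 1) \<and> D (Suc i) = 3 * D i + 2 * int n * j" for i
  proof -
    define j where "j = 3 * c i div n"
    have cs: "c (Suc i) = 3 * c i mod n" unfolding c_def using step_mod by blast
    have eq: "3 * c i = j * n + c (Suc i)" using cs j_def by simp
    have "j < 3"
    proof -
      have "3 * c i < 3 * n" using cn[of i] by simp
      then show ?thesis unfolding j_def by (simp add: less_mult_imp_div_less)
    qed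
    then have "j = 0 \<or> j = 1 \<or> j = 2" by auto
    moreover have "int (3 * c i) = int j * int n + int (c (Suc i))" using eq by simp
    ultimately show ?thesis unfolding D_def
      by (rule_tac x="int j - 1" in exI) (auto simp: algebra_simps)
  qed
  have inv: "\<exists>T::int. D k = 3 ^ k * D 0 + 2 * int n * T \<and> ((0 < D k \<longleftrightarrow> 0 < D 0) \<longleftrightarrow> even T)" for k
  proof (induction k)
    case 0 then show ?case by (rule_tac x=0 in exI) simp
  next
    case (Suc k)
    then obtain T where T: "D k = 3 ^ k * D 0 + 2 * int n * T" "(0 < D k \<longleftrightarrow> 0 < D 0) \<longleftrightarrow> even T" by blast
    obtain j :: int where j: "j = -1 \<or> j = 0 \<or> j = 1" "D (Suc k) = 3 * D k + 2 * int n * j" using rec by blast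
    have sgn: "(0 < D (Suc k) \<longleftrightarrow> 0 < D k) \<longleftrightarrow> j = 0"
      using j Db[of k] Db[of "Suc k"] Dne[of k] Dne[of "Suc k"] n0 by auto
    have par: "even (3 * T + j) \<longleftrightarrow> (even T \<longleftrightarrow> j = 0)" using j(1) by auto
    show ?case
      apply (rule_tac x="3 * T + j" in exI)
      using T j sgn par by (auto simp: algebra_simps)
  qed
  obtain T where T: "D m = 3 ^ m * D 0 + 2 * int n * T" "(0 < D m \<longleftrightarrow> 0 < D 0) \<longleftrightarrow> even T"
    using inv by blast
  have c0: "c 0 = d" unfolding c_def using dn by simp
  have cm: "c m = n - d"
    using neg_mod[OF e, of d 0] dn d0 unfolding c_def by simp
  have Dm: "D m = - D 0" unfolding D_def using cm c0 dn by (simp add: of_nat_diff)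
  have e3: "(3::int) ^ m = 4 * int n - 1" using e by (metis add_diff_cancel_right' of_nat_1 of_nat_add of_nat_mult of_nat_numeral of_nat_power)
  have "- D 0 = (4 * int n - 1) * D 0 + 2 * int n * T" using T(1) Dm e3 by simp
  then have "2 * int n * (2 * D 0 + T) = 0" by (simp add: algebra_simps)
  then have "T = - 2 * D 0" using n0 by simp
  then have "even T" by simp
  then show False using T(2) Dm Dne[of 0] by auto
qed



lemma coset_eq_image:
  fixes x n m :: nat
  assumes e: "3 ^ m + 1 = 4 * n" and m0: "0 < m"
  shows "cyc_coset 3 n x = (\<lambda>i. x * 3 ^ i mod n) ` {..<2 * m}"
proof
  show "cyc_coset 3 n x \<subseteq> (\<lambda>i. x * 3 ^ i mod n) ` {..<2 * m}"
  proof
    fix y assume "y \<in> cyc_coset 3 n x"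
    then obtain i where "y = x * 3 ^ i mod n" unfolding cyc_coset_def by auto
    then have "y = x * 3 ^ (i mod (2 * m)) mod n" using period_red[OF e] by simp
    moreover have "i mod (2 * m) < 2 * m" using m0 by simp
    ultimately show "y \<in> (\<lambda>i. x * 3 ^ i mod n) ` {..<2 * m}" by blast
  qed
next
  show "(\<lambda>i. x * 3 ^ i mod n) ` {..<2 * m} \<subseteq> cyc_coset 3 n x"
    unfolding cyc_coset_def by auto
qed

lemma finite_coset: "0 < n \<Longrightarrow> finite (cyc_coset 3 n x)"
proof -
  assume "0 < n"
  then have "cyc_coset 3 n x \<subseteq> {..<n}" unfolding cyc_coset_def by auto
  then show ?thesis using finite_subset by blast
qed

lemma coset_good:
  fixes x n m :: nat
  assumes e: "3 ^ m + 1 = 4 * n" and m0: "0 < m" and x0: "0 < x" and xn: "x < n - x"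
    and b: "\<And>k. 0 < k \<Longrightarrow> k < m \<Longrightarrow> x < x * 3 ^ k mod n \<and> x * 3 ^ k mod n < n - x"
  shows "is_coset_leader 3 n x \<and> card (cyc_coset 3 n x) = 2 * m"
proof -
  define c where "c i = x * 3 ^ i mod n" for i
  have xlt: "x < n" using xn by simp
  have c0: "c 0 = x" unfolding c_def using xlt by simp
  have lowm: "k < m \<Longrightarrow> x \<le> c k \<and> c k < n - x \<and> (k \<noteq> 0 \<longrightarrow> c k \<noteq> x)" for k
    using b[of k] c0 xn unfolding c_def by (cases "k = 0") auto
  have all: "k < 2 * m \<Longrightarrow> x \<le> c k \<and> (k \<noteq> 0 \<longrightarrow> c k \<noteq> x)" for k
  proof (cases "k < m")
    case True then show ?thesis using lowm by blast
  next
    case False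
    assume k2: "k < 2 * m"
    obtain k' where k': "k = k' + m" "k' < m" using False k2 by (metis add.commute less_diff_conv2 not_less le_add_diff_inverse2 mult_2)
    have "c k = (n - c k') mod n" unfolding c_def k'(1) using neg_mod[OF e] by blast
    moreover have "0 < c k'" "c k' < n - x" using lowm[OF k'(2)] x0 by auto
    ultimately have "c k = n - c k'" by simp
    then show ?thesis using lowm[OF k'(2)] by auto
  qed
  have img: "cyc_coset 3 n x = c ` {..<2 * m}" unfolding c_def using coset_eq_image[OF e m0] by blast
  have "Min (cyc_coset 3 n x) = x"
  proof (rule Min_eqI)
    show "finite (cyc_coset 3 n x)" using finite_coset xlt by simp
    show "\<And>y. y \<in> cyc_coset 3 n x \<Longrightarrow> x \<le> y" using img all by auto
    show "x \<in> cyc_coset 3 n x" using img c0 m0 by force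
  qed
  then have lead: "is_coset_leader 3 n x" unfolding is_coset_leader_def using xlt by simp
  have shift: "c a = c b \<Longrightarrow> c (a + t) = c (b + t)" for a b t
    unfolding c_def using shift_mod by metis
  have per: "c (k + 2 * m) = c k" for k unfolding c_def using period_mod[OF e] by blast
  have "inj_on c {..<2 * m}"
  proof (rule inj_onI)
    fix a b assume a: "a \<in> {..<2 * m}" and b: "b \<in> {..<2 * m}" and ab: "c a = c b"
    show "a = b"
    proof (rule ccontr)
      assume "a \<noteq> b"
      have gen: "c p = c q \<Longrightarrow> p < q \<Longrightarrow> q < 2 * m \<Longrightarrow> False" for p q
      proof -
        assume pq: "c p = c q" "p < q" "q < 2 * m"
        have "c (p + (2 * m - p)) = c (q + (2 * m - p))" using shift pq(1) by blast
        moreover have "p + (2 * m - p) = 0 + 2 * m" using pq by simp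
        moreover have "q + (2 * m - p) = (q - p) + 2 * m" using pq by simp
        ultimately have "c 0 = c (q - p)" using per by metis
        moreover have "q - p < 2 * m" "q - p \<noteq> 0" using pq by auto
        ultimately show False using all c0 by metis
      qed
      show False
      proof (cases "a < b")
        case True then show False using gen[of a b] ab b by auto
      next
        case False then have "b < a" using \<open>a \<noteq> b\<close> by simp
        then show False using gen[of b a] ab a by auto
      qed
    qed
  qed
  then have "card (cyc_coset 3 n x) = 2 * m" using img card_image by fastforce
  then show ?thesis using lead by simp
qed



lemma mod3_step:
  fixes a n :: nat
  assumes "n \<le> a" "a < 2 * n"
  shows "a mod n = a - n"
  using assms by (simp add: le_mod_geq)

lemma nine_mod: "(9::nat) ^ k mod 8 = 1"
proof -
  have "(9::nat) ^ k mod 8 = (9 mod 8) ^ k mod 8" by (rule power_mod[symmetric])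
  then show ?thesis by simp
qed

theorem lemma18:
  fixes m n \<delta>1 \<delta>2 :: nat
  assumes "odd m" and "m \<ge> 5"
    and "n = (3 ^ m + 1) div 4"
    and "\<delta>1 = (3 ^ (m - 1) - 1) div 8"
    and "\<delta>2 = (3 ^ (m - 1) - 1) div 8 - 2"
  shows "is_coset_leader 3 n \<delta>1
       \<and> (\<forall>d. is_coset_leader 3 n d \<longrightarrow> d \<le> \<delta>1)
       \<and> is_coset_leader 3 n \<delta>2 \<and> \<delta>2 < \<delta>1
       \<and> (\<forall>d. is_coset_leader 3 n d \<and> d \<noteq> \<delta>1 \<longrightarrow> d \<le> \<delta>2)
       \<and> card (cyc_coset 3 n \<delta>1) = 2 * m
       \<and> card (cyc_coset 3 n \<delta>2) = 2 * m"
proof -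
  obtain h where h: "m = 2 * h + 1" using assms(1) oddE by blast
  define M where "M = m - 4"
  have M: "m = M + 4" using assms(2) M_def by simp
  have M1: "1 \<le> M" using assms(2) M by simp
  define R where "R = (3::nat) ^ M"
  have R3: "3 \<le> R" unfolding R_def using M1 by (metis power_increasing power_one_right zero_less_numeral one_le_numeral)
  have P9: "(3::nat) ^ (m - 1) = 9 ^ h" using h by (simp add: power_mult)
  have P8: "(9::nat) ^ h mod 8 = 1"
  proof -
    have "(9::nat) ^ h mod 8 = (9 mod 8) ^ h mod 8" by (rule power_mod[symmetric])
    then show ?thesis by simp
  qed
  have PR: "(3::nat) ^ (m - 1) = 27 * R" unfolding R_def M by (simp add: power_add)
  have mR: "(3::nat) ^ m = 81 * R" unfolding R_def M by (simp add: power_add)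
  have Pm: "(3::nat) ^ (m - 1) mod 8 = 1" using P9 P8 by simp
  have d1: "8 * \<delta>1 + 1 = 27 * R"
  proof -
    define P where "P = (3::nat) ^ (m - 1)"
    have "P div 8 * 8 + P mod 8 = P" by (rule div_mult_mod_eq)
    moreover have "P mod 8 = 1" using Pm P_def by simp
    ultimately have P1: "P - 1 = 8 * (P div 8)" by linarith
    have "\<delta>1 = P div 8" using assms(4) P_def P1 by simp
    then show ?thesis using P1 PR P_def Pm by linarith
  qed
  have n6: "n = 6 * \<delta>1 + 1"
  proof -
    have "81 * R + 1 = 4 * (6 * \<delta>1 + 1)" using d1 by simp
    then have "3 ^ m + 1 = 4 * (6 * \<delta>1 + 1)" using mR by simp
    then show ?thesis using assms(3) by simp
  qed
  have n4: "4 * n = 81 * R + 1" using d1 n6 by linarith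
  have e: "3 ^ m + 1 = 4 * n" using n4 mR by simp
  have d12: "\<delta>2 = \<delta>1 - 2" using assms(4,5) by simp
  have d1ge: "10 \<le> \<delta>1" using d1 R3 by linarith
  have oddn: "odd n" using n6 by simp
  have m0: "0 < m" using M by simp
  have A: "k \<le> M + 2 \<Longrightarrow> 2 * (\<delta>1 * 3 ^ (k + 1) mod n) + 3 ^ k = n" for k
  proof (induction k)
    case 0
    have "\<delta>1 * 3 ^ (0 + 1) mod n = 3 * \<delta>1" using n6 by simp
    then show ?case using n6 by simp
  next
    case (Suc k)
    then have IH: "2 * (\<delta>1 * 3 ^ (k + 1) mod n) + 3 ^ k = n" by simp
    have pk: "(3::nat) ^ (Suc k) \<le> 9 * R"
    proof -
      have "(3::nat) ^ (Suc k) \<le> 3 ^ (M + 2)" using Suc.prems by (intro power_increasing) auto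
      then show ?thesis unfolding R_def by (simp add: power_add)
    qed
    define c where "c = \<delta>1 * 3 ^ (k + 1) mod n"
    have cs: "\<delta>1 * 3 ^ (Suc k + 1) mod n = 3 * c mod n" unfolding c_def using step_mod[of \<delta>1 "k+1" n] by simp
    have "3 * c mod n = 3 * c - n" using IH pk n4 unfolding c_def[symmetric] by (intro mod3_step) auto
    moreover have "2 * (3 * c - n) + 3 ^ Suc k = n" using IH pk n4 unfolding c_def[symmetric] by simp
    ultimately show ?case using cs by simp
  qed
  have c1: "is_coset_leader 3 n \<delta>1 \<and> card (cyc_coset 3 n \<delta>1) = 2 * m"
  proof (rule coset_good[OF e m0])
    show "0 < \<delta>1" using d1ge by simp
    show "\<delta>1 < n - \<delta>1" using n6 d1ge by simp
    fix k assume k: "0 < k" "k < m"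
    define k' where "k' = k - 1"
    have k': "k = k' + 1" "k' \<le> M + 2" using k M k'_def by simp_all
    have pk: "(3::nat) ^ k' \<le> 9 * R"
    proof -
      have "(3::nat) ^ k' \<le> 3 ^ (M + 2)" using k' by (intro power_increasing) auto
      then show ?thesis unfolding R_def by (simp add: power_add)
    qed
    show "\<delta>1 < \<delta>1 * 3 ^ k mod n \<and> \<delta>1 * 3 ^ k mod n < n - \<delta>1"
      using A[OF k'(2)] pk k'(1) n6 d1 by simp
  qed
  have d2': "\<delta>2 + 2 = \<delta>1" using d12 d1ge by arith
  have d2: "8 * \<delta>2 + 17 = 27 * R" using d12 d1 d1ge by simp
  have B: "k \<le> M \<Longrightarrow> 2 * (\<delta>2 * 3 ^ (k + 1) mod n) + 13 * 3 ^ k = n" for k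
  proof (induction k)
    case 0
    have "\<delta>2 * 3 ^ (0 + 1) mod n = 3 * \<delta>2" using n6 d12 by simp
    then show ?case using n6 d12 d1ge by simp
  next
    case (Suc k)
    then have IH: "2 * (\<delta>2 * 3 ^ (k + 1) mod n) + 13 * 3 ^ k = n" by simp
    have pk: "(3::nat) ^ (Suc k) \<le> R"
      unfolding R_def using Suc.prems by (intro power_increasing) auto
    define c where "c = \<delta>2 * 3 ^ (k + 1) mod n"
    have cs: "\<delta>2 * 3 ^ (Suc k + 1) mod n = 3 * c mod n" unfolding c_def using step_mod[of \<delta>2 "k+1" n] by simp
    have "3 * c mod n = 3 * c - n" using IH pk n4 unfolding c_def[symmetric] by (intro mod3_step) auto
    moreover have "2 * (3 * c - n) + 13 * 3 ^ Suc k = n" using IH pk n4 unfolding c_def[symmetric] by simp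
    ultimately show ?case using cs by simp
  qed
  define c2 where "c2 = \<delta>2 * 3 ^ (M + 1) mod n"
  have c2e: "2 * c2 + 13 * R = n" using B[of M] unfolding c2_def R_def by simp
  have c3e: "\<delta>2 * 3 ^ (M + 2) mod n = 3 * c2"
  proof -
    have "\<delta>2 * 3 ^ (Suc (M + 1)) mod n = 3 * c2 mod n" unfolding c2_def using step_mod by blast
    moreover have "3 * c2 < n" using c2e n4 R3 by linarith
    ultimately show ?thesis by simp
  qed
  have c4e: "\<delta>2 * 3 ^ (M + 3) mod n = 9 * c2 - n"
  proof -
    have "\<delta>2 * 3 ^ (Suc (M + 2)) mod n = 3 * (3 * c2) mod n" using c3e step_mod by metis
    moreover have "3 * (3 * c2) mod n = 3 * (3 * c2) - n" using c2e n4 R3 by (intro mod3_step) auto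
    ultimately show ?thesis by (simp add: numeral_3_eq_3)
  qed
  have c2b: "is_coset_leader 3 n \<delta>2 \<and> card (cyc_coset 3 n \<delta>2) = 2 * m"
  proof (rule coset_good[OF e m0])
    show "0 < \<delta>2" using d2' d1ge by linarith
    show "\<delta>2 < n - \<delta>2" using n6 d2' d1ge by linarith
    fix k assume k: "0 < k" "k < m"
    have "(\<exists>k'. k = k' + 1 \<and> k' \<le> M) \<or> k = M + 2 \<or> k = M + 3"
      using k M by (intro disjCI) (auto intro: exI[of _ "k - 1"])
    then consider (a) k' where "k = k' + 1" "k' \<le> M" | (b) "k = M + 2" | (c) "k = M + 3"
      by blast
    then show "\<delta>2 < \<delta>2 * 3 ^ k mod n \<and> \<delta>2 * 3 ^ k mod n < n - \<delta>2"
    proof cases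
      case a
      have pk: "(3::nat) ^ k' \<le> R" unfolding R_def using a by (intro power_increasing) auto
      have "2 * (\<delta>2 * 3 ^ k mod n) + 13 * 3 ^ k' = n" using B[OF a(2)] a(1) by simp
      then show ?thesis using pk n4 d2 by linarith
    next
      case b
      have "\<delta>2 * 3 ^ k mod n = 3 * c2" using b c3e by simp
      then show ?thesis using c2e n4 d2 R3 by linarith
    next
      case c
      have "n \<le> 9 * c2" using c2e n4 R3 by linarith
      moreover have "\<delta>2 * 3 ^ k mod n = 9 * c2 - n" using c c4e by simp
      ultimately show ?thesis using c2e n4 d2 R3 by linarith
    qed
  qed
  have LB: "d \<le> \<delta>1" if L: "is_coset_leader 3 n d" for d
  proof (rule ccontr)
    assume nd: "\<not> d \<le> \<delta>1"
    have dn: "d < n" and dmin: "d = Min (cyc_coset 3 n d)" using L unfolding is_coset_leader_def by auto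
    have fin: "finite (cyc_coset 3 n d)" using finite_coset dn by simp
    have ge: "d \<le> d * 3 ^ i mod n" for i
    proof -
      have "d * 3 ^ i mod n \<in> cyc_coset 3 n d" unfolding cyc_coset_def by blast
      then show ?thesis using Min_le[OF fin] dmin by metis
    qed
    have d0: "0 < d" using nd by simp
    show False
    proof (rule no_survivor[OF e oddn dn d0])
      fix i
      define c where "c = d * 3 ^ i mod n"
      have cge: "d \<le> c" using ge c_def by simp
      have cn: "c < n" using dn c_def by simp
      have "d * 3 ^ (i + m) mod n = (n - c) mod n" using neg_mod[OF e] c_def by blast
      also have "... = n - c" using cge d0 cn by simp
      finally have "d \<le> n - c" using ge by metis
      then show "n < 6 * (d * 3 ^ i mod n) \<and> n < 6 * (n - d * 3 ^ i mod n)"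
        using cge nd n6 unfolding c_def[symmetric] by linarith
    qed
  qed
  have NL: "\<not> is_coset_leader 3 n (\<delta>1 - 1)"
  proof
    assume L: "is_coset_leader 3 n (\<delta>1 - 1)"
    have h2: "2 \<le> h" using h assms(2) by simp
    have "3 * R = 3 ^ (M + 1)" unfolding R_def by simp
    also have "M + 1 = 2 * (h - 1)" using M h h2 by simp
    finally have "3 * R = 9 ^ (h - 1)" by (simp add: power_mult)
    then have R8: "3 * R mod 8 = 1" using nine_mod by simp
    define e0 where "e0 = 3 * R div 8"
    have "3 * R div 8 * 8 + 3 * R mod 8 = 3 * R" by (rule div_mult_mod_eq)
    then have e0e: "8 * e0 + 1 = 3 * R" using R8 e0_def by linarith
    have de: "\<delta>1 - 1 = 9 * e0" using e0e d1 by linarith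
    have e01: "1 \<le> e0" using e0e R3 by linarith
    have e0n: "e0 < n" using de n6 by linarith
    have "(\<delta>1 - 1) * 3 ^ (2 * m - 2) mod n = e0 * 3 ^ (0 + 2 * m) mod n"
    proof -
      have "(9::nat) * 3 ^ (2 * m - 2) = 3 ^ (2 * m)"
      proof -
        have "2 * m = (2 * m - 2) + 2" using M by simp
        then have "(3::nat) ^ (2 * m) = 3 ^ (2 * m - 2) * 3 ^ 2" by (metis power_add)
        then show ?thesis by simp
      qed
      then have "(\<delta>1 - 1) * 3 ^ (2 * m - 2) = e0 * 3 ^ (0 + 2 * m)" using de
        by (metis mult.assoc mult.commute add_0)
      then show ?thesis by simp
    qed
    also have "... = e0" using period_mod[OF e, of e0 0] e0n by simp
    finally have "e0 \<in> cyc_coset 3 n (\<delta>1 - 1)" unfolding cyc_coset_def by (metis (mono_tags, lifting) mem_Collect_eq)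
    moreover have "finite (cyc_coset 3 n (\<delta>1 - 1))" using finite_coset e0n by simp
    ultimately have "Min (cyc_coset 3 n (\<delta>1 - 1)) \<le> e0" by (simp add: Min_le)
    then show False using L de e01 unfolding is_coset_leader_def by linarith
  qed
  have SB: "d \<le> \<delta>2" if "is_coset_leader 3 n d \<and> d \<noteq> \<delta>1" for d
  proof -
    have "d \<le> \<delta>1" using LB that by blast
    moreover have "d \<noteq> \<delta>1 - 1" using NL that by blast
    ultimately show ?thesis using that d2' by linarith
  qed
  show ?thesis using c1 c2b LB SB d2' by auto
qed


end
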